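(* Let $T$ be a c.n.u. contraction on $H$ and $(f,g)\in\mathfrak{H}\oplus_\perp\mathfrak{H}$. Then $(f,g)\in\widehat{A_T}$ if and only if $g(\lambda)=\lambda f(\lambda)$ for each $\lambda\in\mathbb{D}_+$ and $\lambda g(\lambda)=f(\lambda)$ for each $\lambda\in\mathbb{D}_-$.
   Context: $H$ is an infinite-dimensional separable complex Hilbert space with inner product $(\cdot,\cdot)_H$; $T\in\mathbb{B}(H)$, $\|T\|\le1$, is completely non-unitary (no nonzero invariant subspace on which $T$ is unitary). $\mathbb{K}=\ker(I-T^*T)$. $\mathbb{H}=H\oplus_\perp H$ with $[(x_1,x_2),(y_1,y_2)]=i(x_1,y_1)_H-i(x_2,y_2)_H$; $S^{\perp_s}=\{a:[a,b]=0\ \forall b\in S\}$; $A_T=\{(x,Tx):x\in\mathbb{K}\}$. $\mathbb{D}_\pm$ are two copies of the open unit disc with centers $0_\pm$; for $\lambda\in\mathbb{D}_\pm$, $\bar\lambda$ is regarded as a point of $\mathbb{D}_\mp$. $N_\lambda=\{(x,\lambda x):x\in H\}\cap A_T^{\perp_s}$ for $\lambda\in\mathbb{D}_+$, $N_\lambda=\{(\lambda x,x):x\in H\}\cap A_T^{\perp_s}$ for $\lambda\in\mathbb{D}_-$. $E_\lambda=pr_1(N_\lambda)$ ($\lambda\in\mathbb{D}_+$), $E_\lambda=pr_2(N_\lambda)$ ($\lambda\in\mathbb{D}_-$), with $pr_i$ the projection of $\mathbb{H}$ onto the $i$-th copy of $H$. $F^\dagger_\lambda=E_{\bar\lambda}$,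 $F_\lambda$ = continuous conjugate-linear functionals on $F^\dagger_\lambda$. For $x\in H$, $\hat x(\lambda)\in F_\lambda$ is $\omega\mapsto(x,\omega)_H$. The map $x\mapsto\hat x$ is injective; $\mathfrak{H}=\{\hat x:x\in H\}$ with inner product $(\hat x,\hat y)_{\mathfrak{H}}=(x,y)_H$ (this is the reproducing kernel Hilbert space of sections of $F$ with kernel $K(\lambda,\mu)=\iota_\lambda^\dagger\iota_\mu$). For $S\subseteq\mathbb{H}$, $\hat S=\{(\hat x,\hat y):(x,y)\in S\}$. *)

theory Defs
  imports "HOL-Analysis.Analysis"
begin

text \<open>An abstract complex Hilbert space: the carrier is the type 'h (with its additive
  group structure), sm is the complex scalar multiplication, ip the inner product
  (linear in the first, conjugate-linear in the second argument).\<close>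

definition hnorm :: "('h \<Rightarrow> 'h \<Rightarrow> complex) \<Rightarrow> 'h \<Rightarrow> real" where
  "hnorm ip x = sqrt (Re (ip x x))"

definition chilbert :: "(complex \<Rightarrow> 'h::ab_group_add \<Rightarrow> 'h) \<Rightarrow> ('h \<Rightarrow> 'h \<Rightarrow> complex) \<Rightarrow> bool" where
  "chilbert sm ip \<longleftrightarrow>
     (\<forall>x. sm 1 x = x) \<and> (\<forall>a b x. sm a (sm b x) = sm (a * b) x) \<and>
     (\<forall>a x y. sm a (x + y) = sm a x + sm a y) \<and> (\<forall>a b x. sm (a + b) x = sm a x + sm b x) \<and>
     (\<forall>x y z. ip (x + y) z = ip x z + ip y z) \<and> (\<forall>a x y. ip (sm a x) y = a * ip x y) \<and>
     (\<forall>x y. ip y x = cnj (ip x y)) \<and> (\<forall>x. Re (ip x x) \<ge> 0) \<and> (\<forall>x. ip x x = 0 \<longrightarrow> x = 0) \<and>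
     (\<forall>X. (\<forall>e>0. \<exists>N. \<forall>m\<ge>N. \<forall>n\<ge>N. hnorm ip (X m - X n) < e)
           \<longrightarrow> (\<exists>L. (\<lambda>n. hnorm ip (X n - L)) \<longlonglongrightarrow> 0))"

definition separable_h :: "('h::ab_group_add \<Rightarrow> 'h \<Rightarrow> complex) \<Rightarrow> bool" where
  "separable_h ip \<longleftrightarrow> (\<exists>D. countable D \<and> (\<forall>x. \<forall>e>0. \<exists>d\<in>D. hnorm ip (x - d) < e))"

definition infinite_dim_h :: "(complex \<Rightarrow> 'h::ab_group_add \<Rightarrow> 'h) \<Rightarrow> bool" where
  "infinite_dim_h sm \<longleftrightarrow> (\<forall>F. finite F \<longrightarrow> (\<exists>x. \<forall>c. x \<noteq> (\<Sum>v\<in>F. sm (c v) v)))"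

definition contraction_op :: "(complex \<Rightarrow> 'h::ab_group_add \<Rightarrow> 'h) \<Rightarrow> ('h \<Rightarrow> 'h \<Rightarrow> complex) \<Rightarrow> ('h \<Rightarrow> 'h) \<Rightarrow> bool" where
  "contraction_op sm ip T \<longleftrightarrow> (\<forall>x y. T (x + y) = T x + T y) \<and> (\<forall>a x. T (sm a x) = sm a (T x)) \<and>
     (\<forall>x. hnorm ip (T x) \<le> hnorm ip x)"

definition closed_subspace_h :: "(complex \<Rightarrow> 'h::ab_group_add \<Rightarrow> 'h) \<Rightarrow> ('h \<Rightarrow> 'h \<Rightarrow> complex) \<Rightarrow> 'h set \<Rightarrow> bool" where
  "closed_subspace_h sm ip M \<longleftrightarrow> 0 \<in> M \<and> (\<forall>x\<in>M. \<forall>y\<in>M. x + y \<in> M) \<and> (\<forall>a. \<forall>x\<in>M. sm a x \<in> M) \<and>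
     (\<forall>X L. (\<forall>n. X n \<in> M) \<and> (\<lambda>n. hnorm ip (X n - L)) \<longlonglongrightarrow> 0 \<longrightarrow> L \<in> M)"

definition cnu :: "(complex \<Rightarrow> 'h::ab_group_add \<Rightarrow> 'h) \<Rightarrow> ('h \<Rightarrow> 'h \<Rightarrow> complex) \<Rightarrow> ('h \<Rightarrow> 'h) \<Rightarrow> bool" where
  "cnu sm ip T \<longleftrightarrow> (\<forall>M. closed_subspace_h sm ip M \<and> T ` M = M \<and> (\<forall>x\<in>M. hnorm ip (T x) = hnorm ip x)
                        \<longrightarrow> M = {0})"

definition hadj :: "('h \<Rightarrow> 'h \<Rightarrow> complex) \<Rightarrow> ('h \<Rightarrow> 'h) \<Rightarrow> 'h \<Rightarrow> 'h" where
  "hadj ip T y = (THE z. \<forall>x. ip (T x) y = ip x z)"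

definition kerK :: "('h::ab_group_add \<Rightarrow> 'h \<Rightarrow> complex) \<Rightarrow> ('h \<Rightarrow> 'h) \<Rightarrow> 'h set" where
  "kerK ip T = {x. x - hadj ip T (T x) = 0}"

definition AT :: "('h::ab_group_add \<Rightarrow> 'h \<Rightarrow> complex) \<Rightarrow> ('h \<Rightarrow> 'h) \<Rightarrow> ('h \<times> 'h) set" where
  "AT ip T = {(x, T x) | x. x \<in> kerK ip T}"

definition krein :: "('h \<Rightarrow> 'h \<Rightarrow> complex) \<Rightarrow> 'h \<times> 'h \<Rightarrow> 'h \<times> 'h \<Rightarrow> complex" where
  "krein ip a b = \<i> * ip (fst a) (fst b) - \<i> * ip (snd a) (snd b)"

definition perp_s :: "('h \<Rightarrow> 'h \<Rightarrow> complex) \<Rightarrow> ('h \<times> 'h) set \<Rightarrow> ('h \<times> 'h) set" where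
  "perp_s ip S = {a. \<forall>b\<in>S. krein ip a b = 0}"

text \<open>Points of the two discs: (True, z) is z in D_+, (False, z) is z in D_-, with |z| < 1.
  The "conjugate" point of (s, z) is (\<not> s, cnj z).\<close>
definition disc_pts :: "(bool \<times> complex) set" where
  "disc_pts = {p. cmod (snd p) < 1}"

definition Nl :: "(complex \<Rightarrow> 'h::ab_group_add \<Rightarrow> 'h) \<Rightarrow> ('h \<Rightarrow> 'h \<Rightarrow> complex) \<Rightarrow> ('h \<Rightarrow> 'h) \<Rightarrow> bool \<times> complex \<Rightarrow> ('h \<times> 'h) set" where
  "Nl sm ip T p = (if fst p then {(x, sm (snd p) x) | x. True} else {(sm (snd p) x, x) | x. True})
                  \<inter> perp_s ip (AT ip T)"

definition El :: "(complex \<Rightarrow> 'h::ab_group_add \<Rightarrow> 'h) \<Rightarrow> ('h \<Rightarrow> 'h \<Rightarrow> complex) \<Rightarrow> ('h \<Rightarrow> 'h) \<Rightarrow> bool \<times> complex \<Rightarrow> 'h set" where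
  "El sm ip T p = (if fst p then fst ` Nl sm ip T p else snd ` Nl sm ip T p)"

definition Fdag :: "(complex \<Rightarrow> 'h::ab_group_add \<Rightarrow> 'h) \<Rightarrow> ('h \<Rightarrow> 'h \<Rightarrow> complex) \<Rightarrow> ('h \<Rightarrow> 'h) \<Rightarrow> bool \<times> complex \<Rightarrow> 'h set" where
  "Fdag sm ip T p = El sm ip T (\<not> fst p, cnj (snd p))"

text \<open>x-hat: lambda maps to the functional omega |-> (x, omega) on F^dagger_lambda
  (represented as a total function; only its values on F^dagger_lambda matter).\<close>
definition hat :: "('h \<Rightarrow> 'h \<Rightarrow> complex) \<Rightarrow> 'h \<Rightarrow> bool \<times> complex \<Rightarrow> 'h \<Rightarrow> complex" where
  "hat ip x = (\<lambda>p \<omega>. ip x \<omega>)"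

definition frakH :: "('h \<Rightarrow> 'h \<Rightarrow> complex) \<Rightarrow> (bool \<times> complex \<Rightarrow> 'h \<Rightarrow> complex) set" where
  "frakH ip = range (hat ip)"

definition hatS :: "('h \<Rightarrow> 'h \<Rightarrow> complex) \<Rightarrow> ('h \<times> 'h) set \<Rightarrow> ((bool \<times> complex \<Rightarrow> 'h \<Rightarrow> complex) \<times> (bool \<times> complex \<Rightarrow> 'h \<Rightarrow> complex)) set" where
  "hatS ip S = {(hat ip x, hat ip y) | x y. (x, y) \<in> S}"

end

theory Submission
  imports Defs
begin

locale hs =
  fixes sm :: "complex \<Rightarrow> 'h::ab_group_add \<Rightarrow> 'h" and ip :: "'h \<Rightarrow> 'h \<Rightarrow> complex"
  assumes ch: "chilbert sm ip"
begin

abbreviation nm where "nm x \<equiv> hnorm ip x"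

lemma sm_one[simp]: "sm 1 x = x" by (rule ch[unfolded chilbert_def, THEN conjunct1, rule_format])
lemma sm_sm[simp]: "sm a (sm b x) = sm (a*b) x" by (rule ch[unfolded chilbert_def, THEN conjunct2, THEN conjunct1, rule_format])
lemma sm_add_right[simp]: "sm a (x + y) = sm a x + sm a y" by (rule ch[unfolded chilbert_def, THEN conjunct2, THEN conjunct2, THEN conjunct1, rule_format])
lemma sm_add_left: "sm (a + b) x = sm a x + sm b x" by (rule ch[unfolded chilbert_def, THEN conjunct2, THEN conjunct2, THEN conjunct2, THEN conjunct1, rule_format])
lemma ip_add_left[simp]: "ip (x + y) z = ip x z + ip y z" by (rule ch[unfolded chilbert_def, THEN conjunct2, THEN conjunct2, THEN conjunct2, THEN conjunct2, THEN conjunct1, rule_format])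
lemma ip_sm_left[simp]: "ip (sm a x) y = a * ip x y" by (rule ch[unfolded chilbert_def, THEN conjunct2, THEN conjunct2, THEN conjunct2, THEN conjunct2, THEN conjunct2, THEN conjunct1, rule_format])
lemma ip_sym: "ip y x = cnj (ip x y)" by (rule ch[unfolded chilbert_def, THEN conjunct2, THEN conjunct2, THEN conjunct2, THEN conjunct2, THEN conjunct2, THEN conjunct2, THEN conjunct1, rule_format])
lemma ip_pos: "Re (ip x x) \<ge> 0" by (rule ch[unfolded chilbert_def, THEN conjunct2, THEN conjunct2, THEN conjunct2, THEN conjunct2, THEN conjunct2, THEN conjunct2, THEN conjunct2, THEN conjunct1, rule_format])
lemma ip_zero_imp: "ip x x = 0 \<Longrightarrow> x = 0" by (rule ch[unfolded chilbert_def, THEN conjunct2, THEN conjunct2, THEN conjunct2, THEN conjunct2, THEN conjunct2, THEN conjunct2, THEN conjunct2, THEN conjunct2, THEN conjunct1, rule_format])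
lemma completeness: "(\<forall>e>0. \<exists>N. \<forall>m\<ge>N. \<forall>n\<ge>N. nm (X m - X n) < e)
           \<Longrightarrow> (\<exists>L. (\<lambda>n. nm (X n - L)) \<longlonglongrightarrow> 0)" by (rule ch[unfolded chilbert_def, THEN conjunct2, THEN conjunct2, THEN conjunct2, THEN conjunct2, THEN conjunct2, THEN conjunct2, THEN conjunct2, THEN conjunct2, THEN conjunct2, THEN spec, THEN mp])

lemma sm_zero_left[simp]: "sm 0 x = 0"
proof -
  have "sm 0 x = sm 0 x + sm 0 x" using sm_add_left[of 0 0 x] by simp
  thus ?thesis by simp
qed
lemma sm_zero_right[simp]: "sm a 0 = 0"
proof -
  have "sm a 0 = sm a 0 + sm a 0" using sm_add_right[of a 0 0] by simp
  thus ?thesis by simp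
qed
lemma sm_minus_right[simp]: "sm a (- x) = - sm a x"
proof -
  have "sm a x + sm a (-x) = 0" using sm_add_right[of a x "-x"] by simp
  thus ?thesis by (simp add: eq_neg_iff_add_eq_0 add.commute)
qed
lemma sm_diff_right[simp]: "sm a (x - y) = sm a x - sm a y"
  using sm_add_right[of a x "-y"] by simp
lemma sm_minus_left: "sm (-a) x = - sm a x"
proof -
  have "sm a x + sm (-a) x = 0" using sm_add_left[of a "-a" x] by simp
  thus ?thesis by (simp add: eq_neg_iff_add_eq_0 add.commute)
qed
lemma sm_diff_left: "sm (a - b) x = sm a x - sm b x"
  using sm_add_left[of a "-b" x] sm_minus_left[of b x] by simp
lemma ip_zero_left[simp]: "ip 0 y = 0"
  using ip_sm_left[of 0 0 y] by simp
lemma ip_minus_left[simp]: "ip (- x) y = - ip x y"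
  using ip_add_left[of x "-x" y] by (simp add: eq_neg_iff_add_eq_0 add.commute)
lemma ip_diff_left[simp]: "ip (x - y) z = ip x z - ip y z"
  using ip_add_left[of x "-y" z] by simp
lemma ip_add_right[simp]: "ip x (y + z) = ip x y + ip x z"
  by (metis ip_add_left ip_sym complex_cnj_add)
lemma ip_sm_right[simp]: "ip x (sm a y) = cnj a * ip x y"
  by (metis ip_sm_left ip_sym complex_cnj_mult)
lemma ip_zero_right[simp]: "ip x 0 = 0"
  by (metis ip_zero_left ip_sym complex_cnj_zero)
lemma ip_minus_right[simp]: "ip x (- y) = - ip x y"
  by (metis ip_minus_left ip_sym complex_cnj_minus)
lemma ip_diff_right[simp]: "ip x (y - z) = ip x y - ip x z"
  by (metis ip_diff_left ip_sym complex_cnj_diff)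
lemma ip_self_Im: "Im (ip x x) = 0"
  using ip_sym[of x x] by (metis cnj.simps(2) complex_cnj_cancel_iff neg_equal_zero)
lemma nm_sq: "(nm x)^2 = Re (ip x x)" by (simp add: hnorm_def ip_pos)
lemma ip_self: "ip x x = of_real ((nm x)^2)"
  using ip_self_Im[of x] by (simp add: nm_sq complex_eq_iff)
lemma nm_nonneg[simp]: "nm x \<ge> 0" by (simp add: hnorm_def ip_pos)
lemma nm_eq0[simp]: "nm x = 0 \<longleftrightarrow> x = 0"
proof
  assume "nm x = 0" then have "ip x x = 0" by (simp add: ip_self)
  thus "x = 0" by (rule ip_zero_imp)
qed (simp add: hnorm_def)
lemma nm_zero[simp]: "nm 0 = 0" by simp
lemma nm_sm[simp]: "nm (sm a x) = cmod a * nm x"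
proof -
  have "ip (sm a x) (sm a x) = (a * cnj a) * ip x x" by simp
  also have "\<dots> = of_real ((cmod a)^2 * (nm x)^2)"
    by (simp add: ip_self complex_norm_square[symmetric])
  finally have "Re (ip (sm a x) (sm a x)) = (cmod a * nm x)^2"
    by (simp add: power_mult_distrib)
  hence "nm (sm a x) = sqrt ((cmod a * nm x)^2)" unfolding hnorm_def[of ip "sm a x"] by (rule arg_cong)
  thus ?thesis by simp
qed

lemma nm_minus[simp]: "nm (- x) = nm x"
  using nm_sm[of "-1" x] sm_minus_left[of 1 x] by simp
lemma nm_commute: "nm (x - y) = nm (y - x)"
  using nm_minus[of "x - y"] by simp

lemma CS: "cmod (ip x y) \<le> nm x * nm y"
proof (cases "y = 0")
  case True thus ?thesis by simp
next
  case False
  define b where "b = ip x y"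
  define c where "c = ip y y"
  define Y where "Y = (nm y)^2"
  define X where "X = (nm x)^2"
  have Ypos: "Y > 0" using False by (simp add: Y_def)
  have c: "c = of_real Y" "cnj c = c" by (simp_all add: c_def Y_def ip_self)
  have bb: "ip y x = cnj b" using ip_sym[of x y] b_def by simp
  have xx: "ip x x = of_real X" by (simp add: X_def ip_self)
  have "ip (sm c x - sm b y) (sm c x - sm b y)
      = c * (cnj c * ip x x) - c * (cnj b * ip x y) - (b * (cnj c * ip y x) - b * (cnj b * ip y y))"
    by (simp add: algebra_simps)
  also have "\<dots> = c * (c * of_real X) - c * (cnj b * b)"
    by (simp add: c bb xx flip: b_def c_def)
  also have "\<dots> = of_real (Y * (Y * X - (cmod b)^2))"
  proof -
    have "cnj b * b = of_real ((cmod b)^2)" by (simp add: complex_norm_square mult.commute del: of_real_power)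
    thus ?thesis by (simp add: c algebra_simps)
  qed
  finally have eq: "ip (sm c x - sm b y) (sm c x - sm b y) = of_real (Y * (Y * X - (cmod b)^2))" .
  have "Y * (Y * X - (cmod b)^2) \<ge> 0" using ip_pos[of "sm c x - sm b y"] unfolding eq by simp
  hence "(cmod b)^2 \<le> X * Y" using Ypos
    by (simp add: zero_le_mult_iff algebra_simps)
  also have "X * Y = (nm x * nm y)^2" by (simp add: X_def Y_def power_mult_distrib)
  finally show ?thesis unfolding b_def
    by (meson mult_nonneg_nonneg nm_nonneg power2_le_imp_le)
qed

lemma nm_add: "nm (x + y) \<le> nm x + nm y"
proof -
  have r: "Re (ip y x) = Re (ip x y)" using ip_sym[of x y] by simp
  have c: "Re (ip x y) \<le> nm x * nm y" using CS[of x y] complex_Re_le_cmod order_trans by blast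
  have "(nm (x + y))^2 = (nm x)^2 + 2 * Re (ip x y) + (nm y)^2"
    by (simp add: nm_sq r)
  also have "\<dots> \<le> (nm x + nm y)^2" using c by (simp add: power2_sum)
  finally show ?thesis by (metis power2_le_imp_le add_nonneg_nonneg nm_nonneg)
qed

lemma nm_tri: "nm (x - z) \<le> nm (x - y) + nm (y - z)"
proof -
  have "x - z = (x - y) + (y - z)" by simp
  thus ?thesis using nm_add[of "x - y" "y - z"] by metis
qed

lemma nm_diff_ge: "\<bar>nm x - nm y\<bar> \<le> nm (x - y)"
proof -
  have a: "nm x \<le> nm (x - y) + nm y" using nm_tri[of x 0 y] nm_tri[of x y 0] by simp
  have b: "nm y \<le> nm (x - y) + nm x" using nm_tri[of y 0 x] nm_commute[of x y] by simp
  show ?thesis using a b by linarith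
qed

definition clo :: "'h set \<Rightarrow> 'h set" where
  "clo S = {v. \<forall>e>0. \<exists>s\<in>S. nm (v - s) < e}"

definition subsp :: "'h set \<Rightarrow> bool" where
  "subsp S \<longleftrightarrow> 0 \<in> S \<and> (\<forall>x\<in>S. \<forall>y\<in>S. x + y \<in> S) \<and> (\<forall>a. \<forall>x\<in>S. sm a x \<in> S)"

lemma subsp_add: "subsp S \<Longrightarrow> x \<in> S \<Longrightarrow> y \<in> S \<Longrightarrow> x + y \<in> S" by (simp add: subsp_def)
lemma subsp_sm: "subsp S \<Longrightarrow> x \<in> S \<Longrightarrow> sm a x \<in> S" by (simp add: subsp_def)
lemma subsp_0: "subsp S \<Longrightarrow> 0 \<in> S" by (simp add: subsp_def)
lemma subsp_minus: "subsp S \<Longrightarrow> x \<in> S \<Longrightarrow> - x \<in> S"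
  using subsp_sm[of S x "-1"] sm_minus_left[of 1 x] by simp
lemma subsp_diff: "subsp S \<Longrightarrow> x \<in> S \<Longrightarrow> y \<in> S \<Longrightarrow> x - y \<in> S"
  using subsp_add[of S x "-y"] subsp_minus by simp

lemma cloD: "v \<in> clo S \<Longrightarrow> e > 0 \<Longrightarrow> \<exists>s\<in>S. nm (v - s) < e"
  unfolding clo_def by blast
lemma cloI: "(\<And>e. e > 0 \<Longrightarrow> \<exists>s\<in>S. nm (v - s) < e) \<Longrightarrow> v \<in> clo S"
  unfolding clo_def by blast

lemma clo_sub: "S \<subseteq> clo S" unfolding clo_def by force

lemma clo_clo: "clo (clo S) \<subseteq> clo S"
proof
  fix v assume v: "v \<in> clo (clo S)"
  show "v \<in> clo S" unfolding clo_def
  proof (intro CollectI allI impI)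
    fix e :: real assume e: "e > 0"
    then obtain u where u: "u \<in> clo S" "nm (v - u) < e/2" using cloD[OF v, of "e/2"] e by auto
    then obtain s where s: "s \<in> S" "nm (u - s) < e/2" using cloD[OF u(1), of "e/2"] e by auto
    have "nm (v - s) < e" using nm_tri[of v s u] u s by simp
    thus "\<exists>s\<in>S. nm (v - s) < e" using s by blast
  qed
qed

lemma clo_mono: "S \<subseteq> S' \<Longrightarrow> clo S \<subseteq> clo S'" unfolding clo_def by blast

lemma subsp_clo: assumes "subsp S" shows "subsp (clo S)"
  unfolding subsp_def
proof (intro conjI ballI allI)
  show "0 \<in> clo S" using assms clo_sub subsp_0 by blast
next
  fix x y assume x: "x \<in> clo S" and y: "y \<in> clo S"
  show "x + y \<in> clo S" unfolding clo_def
  proof (intro CollectI allI impI)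
    fix e :: real assume e: "e > 0"
    obtain s where s: "s \<in> S" "nm (x - s) < e/2" using cloD[OF x, of "e/2"] e by auto
    obtain t where t: "t \<in> S" "nm (y - t) < e/2" using cloD[OF y, of "e/2"] e by auto
    have eq: "(x + y) - (s + t) = (x - s) + (y - t)" by (simp add: algebra_simps)
    have "nm ((x + y) - (s + t)) < e"
      using nm_add[of "x - s" "y - t"] s(2) t(2) unfolding eq by linarith
    moreover have "s + t \<in> S" using s t subsp_add[OF assms] by blast
    ultimately show "\<exists>r\<in>S. nm (x + y - r) < e" by blast
  qed
next
  fix a x assume x: "x \<in> clo S"
  show "sm a x \<in> clo S"
  proof (cases "a = 0")
    case True thus ?thesis using assms clo_sub subsp_0 by auto
  next
    case False
    show ?thesis unfolding clo_def
    proof (intro CollectI allI impI)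
      fix e :: real assume e: "e > 0"
      have "e / cmod a > 0" using e False by simp
      then obtain s where s: "s \<in> S" "nm (x - s) < e / cmod a" using cloD[OF x] by blast
      have "nm (sm a x - sm a s) = cmod a * nm (x - s)" using nm_sm[of a "x - s"] by simp
      also have "\<dots> < e" using s False by (simp add: pos_less_divide_eq mult.commute)
      finally show "\<exists>r\<in>S. nm (sm a x - r) < e" using s subsp_sm[OF assms] by blast
    qed
  qed
qed


end

context hs begin
lemma cauchy_lim:
  assumes c: "c \<ge> 0" and h: "\<And>m n. nm (X m - X n) \<le> c / Suc m + c / Suc n"
  shows "\<exists>L. \<forall>n. nm (X n - L) \<le> c / Suc n"
proof -
  have "\<forall>e>0. \<exists>N. \<forall>m\<ge>N. \<forall>n\<ge>N. nm (X m - X n) < e"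
  proof (intro allI impI)
    fix e :: real assume e: "e > 0"
    obtain N :: nat where N: "2 * c / e < real N" using reals_Archimedean2 by blast
    have cN: "c / Suc N < e / 2"
    proof -
      have "2 * c < real N * e" using N e by (simp add: pos_divide_less_eq)
      hence "2 * c < real (Suc N) * e" using e c by (smt (verit) of_nat_Suc distrib_right mult_cancel_right1)
      have p: "real (Suc N) > 0" by simp
      have "e / 2 * real (Suc N) = (real (Suc N) * e) / 2" by simp
      hence "c < e / 2 * real (Suc N)" using \<open>2 * c < real (Suc N) * e\<close> by linarith
      thus ?thesis by (subst pos_divide_less_eq[OF p])
    qed
    have mono: "\<And>m. m \<ge> N \<Longrightarrow> c / Suc m \<le> c / Suc N" using c by (intro divide_left_mono) auto
    show "\<exists>N. \<forall>m\<ge>N. \<forall>n\<ge>N. nm (X m - X n) < e"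
    proof (intro exI[of _ N] allI impI)
      fix m n assume mn: "m \<ge> N" "n \<ge> N"
      have "nm (X m - X n) \<le> c / Suc m + c / Suc n" by (rule h)
      also have "\<dots> \<le> c / Suc N + c / Suc N" using mono mn by (intro add_mono) auto
      also have "\<dots> < e" using cN by linarith
      finally show "nm (X m - X n) < e" .
    qed
  qed
  from completeness[OF this] obtain L where L: "(\<lambda>n. nm (X n - L)) \<longlonglongrightarrow> 0" by blast
  have "\<forall>n. nm (X n - L) \<le> c / Suc n"
  proof
    fix n
    have lim: "(\<lambda>m. c / Suc n + c * inverse (real (Suc m)) + nm (X m - L)) \<longlonglongrightarrow> c / Suc n + c * 0 + 0"
      by (intro tendsto_add tendsto_mult tendsto_const L LIMSEQ_inverse_real_of_nat)
    have "\<forall>m. nm (X n - L) \<le> c / Suc n + c * inverse (real (Suc m)) + nm (X m - L)"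
    proof
      fix m
      have "nm (X n - L) \<le> nm (X n - X m) + nm (X m - L)" by (rule nm_tri)
      also have "nm (X n - X m) \<le> c / Suc n + c / Suc m" by (rule h)
      finally show "nm (X n - L) \<le> c / Suc n + c * inverse (real (Suc m)) + nm (X m - L)"
        by (simp add: divide_inverse)
    qed
    thus "nm (X n - L) \<le> c / Suc n" using LIMSEQ_le_const[OF lim] by auto
  qed
  thus ?thesis by blast
qed

lemma parallelogram: "(nm (a + b))^2 + (nm (a - b))^2 = 2 * (nm a)^2 + 2 * (nm b)^2"
  by (simp add: nm_sq)

lemma nm_sq_diff_sm: "(nm (q - sm t s))^2 = (nm q)^2 - 2 * Re (cnj t * ip q s) + (cmod t)^2 * (nm s)^2"
proof -
  have 1: "ip (q - sm t s) (q - sm t s) = ip q q - cnj t * ip q s - t * ip s q + (t * cnj t) * ip s s"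
    by (simp add: algebra_simps)
  have 2: "t * ip s q = cnj (cnj t * ip q s)" using ip_sym[of q s] by simp
  have 3: "t * cnj t = of_real ((cmod t)^2)" by (simp add: complex_norm_square del: of_real_power)
  have "Re (ip (q - sm t s) (q - sm t s)) = Re (ip q q) - Re (cnj t * ip q s) - Re (t * ip s q) + Re ((t * cnj t) * ip s s)"
    unfolding 1 by simp
  also have "\<dots> = Re (ip q q) - 2 * Re (cnj t * ip q s) + (cmod t)^2 * Re (ip s s)"
    unfolding 2 3 by (simp del: of_real_power)
  finally show ?thesis by (simp add: nm_sq)
qed

lemma orth_min:
  assumes h: "\<And>t. nm q \<le> nm (q - sm t s)"
  shows "ip q s = 0"
proof (rule ccontr)
  assume nz: "ip q s \<noteq> 0"
  define b where "b = ip q s"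
  define B where "B = (cmod b)^2"
  have Bpos: "B > 0" using nz by (simp add: B_def b_def)
  define r where "r = 1 / ((nm s)^2 + 1)"
  have sp: "(nm s)^2 + 1 > 0" by (simp add: add_nonneg_pos)
  hence rpos: "r > 0" by (simp add: r_def)
  have rs: "r * (nm s)^2 < 1" using sp by (simp add: r_def divide_less_eq)
  define t where "t = of_real r * b"
  have "(nm q)^2 \<le> (nm (q - sm t s))^2"
    by (rule power_mono[OF h nm_nonneg])
  also have "\<dots> = (nm q)^2 - 2 * Re (cnj t * ip q s) + (cmod t)^2 * (nm s)^2"
    by (rule nm_sq_diff_sm)
  also have "Re (cnj t * ip q s) = r * B"
  proof -
    have cb: "cnj b * b = of_real B" unfolding B_def
      by (simp add: complex_norm_square mult.commute del: of_real_power)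
    have "cnj t * ip q s = of_real r * (cnj b * b)" by (simp add: t_def b_def)
    also have "\<dots> = of_real (r * B)" by (simp add: cb)
    finally show ?thesis by simp
  qed
  also have "(cmod t)^2 = r^2 * B" using rpos
    by (simp add: t_def B_def norm_mult power_mult_distrib)
  finally have "2 * r * B \<le> r^2 * B * (nm s)^2" by simp
  hence "2 * r * B \<le> r * B * (r * (nm s)^2)" by (simp add: power2_eq_square mult.assoc mult.left_commute)
  also have "\<dots> < r * B * 1" using rs rpos Bpos by (intro mult_strict_left_mono) auto
  finally show False using rpos Bpos by simp
qed


lemma small_n: "e > 0 \<Longrightarrow> \<exists>n. 1 / real (Suc n) < e"
proof -
  assume e: "e > 0"
  obtain n where n: "n > 0" "inverse (real n) < e" using ex_inverse_of_nat_less[OF e] by blast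
  have "1 / real (Suc n) \<le> 1 / real n" using n(1) by (intro divide_left_mono) auto
  thus ?thesis using n(2) by (intro exI[of _ n]) (simp add: divide_inverse)
qed

lemma sm_two: "sm 2 u = u + u"
  using sm_add_left[of 1 1 u] by simp

lemma proj:
  assumes C: "subsp C" "clo C \<subseteq> C"
  shows "\<exists>p\<in>C. \<forall>s\<in>C. ip (u - p) s = 0"
proof -
  define D where "D = (\<lambda>c. nm (u - c)) ` C"
  define d where "d = Inf D"
  have Dne: "D \<noteq> {}" using subsp_0[OF C(1)] by (auto simp: D_def)
  have Dbdd: "bdd_below D" unfolding D_def by (rule bdd_belowI[of _ 0]) auto
  have dle: "\<And>c. c \<in> C \<Longrightarrow> d \<le> nm (u - c)" unfolding d_def
    by (rule cInf_lower[OF _ Dbdd]) (auto simp: D_def)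
  have d0: "d \<ge> 0" unfolding d_def by (rule cInf_greatest[OF Dne]) (auto simp: D_def)
  define eps where "eps n = min 1 (1 / ((4*d+2) * (real (Suc n))^2))" for n
  have epspos: "eps n > 0" for n using d0 by (simp add: eps_def)
  have eps1: "eps n \<le> 1" for n by (simp add: eps_def)
  have eps2: "eps n * (2*d+1) \<le> 1 / (2 * (real (Suc n))^2)" for n
  proof -
    have "eps n \<le> 1 / ((4*d+2) * (real (Suc n))^2)" by (simp add: eps_def)
    hence "eps n * (2*d+1) \<le> 1 / ((4*d+2) * (real (Suc n))^2) * (2*d+1)"
      using d0 by (intro mult_right_mono) auto
    also have "\<dots> = 1 / (2 * (real (Suc n))^2)"
    proof -
      have ne: "2*d+1 \<noteq> 0" using d0 by simp
      have eq: "(4*d+2) * (real (Suc n))^2 = (2*d+1) * (2 * (real (Suc n))^2)" by (simp add: algebra_simps)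
      show ?thesis unfolding eq using ne by simp
    qed
    finally show ?thesis .
  qed
  have eps3: "eps n \<le> 1 / real (Suc n)" for n
  proof -
    have "eps n \<le> 1 / ((4*d+2) * (real (Suc n))^2)" by (simp add: eps_def)
    also have "\<dots> \<le> 1 / real (Suc n)"
    proof (rule divide_left_mono)
      have "real (Suc n) \<le> (real (Suc n))^2" by (simp add: power2_eq_square)
      also have "\<dots> \<le> (4*d+2) * (real (Suc n))^2" using d0 by simp
      finally show "real (Suc n) \<le> (4*d+2) * (real (Suc n))^2" .
    qed (use d0 in auto)
    finally show ?thesis .
  qed
  have "\<forall>n. \<exists>c\<in>C. nm (u - c) < d + eps n"
  proof
    fix n
    have "Inf D < d + eps n" using epspos[of n] by (simp add: d_def)
    then obtain x where "x \<in> D" "x < d + eps n" using cInf_less_iff[OF Dne Dbdd] by blast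
    thus "\<exists>c\<in>C. nm (u - c) < d + eps n" by (auto simp: D_def)
  qed
  then obtain cs where cs: "\<And>n. cs n \<in> C" "\<And>n. nm (u - cs n) < d + eps n" by metis
  have sq: "(nm (u - cs n))^2 \<le> d^2 + 1 / (2 * (real (Suc n))^2)" for n
  proof -
    have "(nm (u - cs n))^2 \<le> (d + eps n)^2" using cs(2)[of n] by (intro power_mono) auto
    also have "\<dots> = d^2 + eps n * (2*d + eps n)" by (simp add: power2_eq_square algebra_simps)
    also have "eps n * (2*d + eps n) \<le> eps n * (2*d+1)" using eps1[of n] epspos[of n]
      by (intro mult_left_mono) auto
    finally show ?thesis using eps2[of n] by linarith
  qed
  have cauchy: "nm (cs m - cs n) \<le> 1 / Suc m + 1 / Suc n" for m n
  proof -
    define a where "a = u - cs m"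
    define b where "b = u - cs n"
    define mid where "mid = sm (1/2) (cs m + cs n)"
    have midC: "mid \<in> C" unfolding mid_def using cs(1) C(1) by (intro subsp_sm subsp_add) auto
    have ab: "a + b = sm 2 (u - mid)"
    proof -
      have "sm 2 (u - mid) = sm 2 u - sm (2 * (1/2)) (cs m + cs n)" by (simp add: mid_def)
      also have "\<dots> = u + u - (cs m + cs n)" by (simp add: sm_two)
      finally show ?thesis by (simp add: a_def b_def algebra_simps)
    qed
    have "nm (a + b) = 2 * nm (u - mid)" by (simp only: ab nm_sm) simp
    hence "nm (a + b) \<ge> 2 * d" using dle[OF midC] by simp
    hence "(2 * d)^2 \<le> (nm (a + b))^2" using d0 by (intro power_mono) auto
    hence m4: "(nm (a + b))^2 \<ge> 4 * d^2" by (simp add: power_mult_distrib)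
    have amb: "a - b = cs n - cs m" by (simp add: a_def b_def)
    have "(nm (cs n - cs m))^2 = 2 * (nm a)^2 + 2 * (nm b)^2 - (nm (a + b))^2"
      using parallelogram[of a b] amb by simp
    also have "\<dots> \<le> 1 / (real (Suc m))^2 + 1 / (real (Suc n))^2"
    proof -
      have h1: "1 / (2 * (real (Suc m))^2) = (1 / (real (Suc m))^2) / 2" by simp
      have h2: "1 / (2 * (real (Suc n))^2) = (1 / (real (Suc n))^2) / 2" by simp
      have lin: "\<And>A B D M x y :: real. A \<le> D + x/2 \<Longrightarrow> B \<le> D + y/2 \<Longrightarrow> 4*D \<le> M \<Longrightarrow> 2*A + 2*B - M \<le> x + y"
        by linarith
      show ?thesis using sq[of m] sq[of n] m4 unfolding a_def b_def h1 h2 by (rule lin)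
    qed
    also have "\<dots> \<le> (1 / Suc m + 1 / Suc n)^2" by (simp add: power2_sum power_divide)
    finally have "(nm (cs m - cs n))^2 \<le> (1 / Suc m + 1 / Suc n)^2" by (simp only: nm_commute[of "cs m" "cs n"])
    thus ?thesis by (rule power2_le_imp_le) simp
  qed
  obtain p where p: "\<And>n. nm (cs n - p) \<le> 1 / Suc n"
    using cauchy_lim[of 1 cs] cauchy by auto
  have pC: "p \<in> C"
  proof -
    have "p \<in> clo C"
    proof (rule cloI)
      fix e :: real assume "e > 0"
      then obtain n where n: "1 / real (Suc n) < e" using small_n by blast
      have "nm (p - cs n) < e" using p[of n] n by (simp add: nm_commute)
      thus "\<exists>s\<in>C. nm (p - s) < e" using cs(1) by blast
    qed
    thus ?thesis using C(2) by blast
  qed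
  have pd: "nm (u - p) \<le> d"
  proof (rule ccontr)
    assume "\<not> nm (u - p) \<le> d"
    hence g: "(nm (u - p) - d) / 2 > 0" by simp
    obtain n where n: "1 / real (Suc n) < (nm (u - p) - d) / 2" using small_n[OF g] by blast
    have "nm (u - p) \<le> nm (u - cs n) + nm (cs n - p)" by (rule nm_tri)
    also have "\<dots> < d + eps n + 1 / Suc n" using cs(2)[of n] p[of n] by linarith
    also have "\<dots> \<le> d + 2 / Suc n" using eps3[of n] by simp
    finally show False using n by simp
  qed
  have "\<forall>s\<in>C. ip (u - p) s = 0"
  proof
    fix s assume s: "s \<in> C"
    show "ip (u - p) s = 0"
    proof (rule orth_min)
      fix t
      have "p + sm t s \<in> C" using s pC C(1) by (intro subsp_add subsp_sm) auto
      hence "d \<le> nm (u - (p + sm t s))" by (rule dle)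
      also have "u - (p + sm t s) = (u - p) - sm t s" by (simp add: algebra_simps)
      finally show "nm (u - p) \<le> nm (u - p - sm t s)" using pd by simp
    qed
  qed
  thus ?thesis using pC by blast
qed

lemma ortho_clo:
  assumes S: "subsp S" and h: "\<And>w. (\<forall>s\<in>S. ip s w = 0) \<Longrightarrow> ip u w = 0"
  shows "u \<in> clo S"
proof -
  obtain p where p: "p \<in> clo S" "\<forall>s\<in>clo S. ip (u - p) s = 0"
    using proj[OF subsp_clo[OF S] clo_clo] by blast
  have "\<forall>s\<in>S. ip s (u - p) = 0" using p(2) clo_sub ip_sym by (metis complex_cnj_zero subsetD)
  hence "ip u (u - p) = 0" by (rule h)
  moreover have "ip p (u - p) = 0" using p ip_sym by (metis complex_cnj_zero)
  ultimately have "ip (u - p) (u - p) = 0" by simp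
  hence "u - p = 0" by (rule ip_zero_imp)
  thus ?thesis using p(1) by simp
qed

lemma riesz:
  fixes \<phi> :: "'h \<Rightarrow> complex"
  assumes add: "\<And>u v. \<phi> (u + v) = \<phi> u + \<phi> v" and hom: "\<And>a u. \<phi> (sm a u) = a * \<phi> u"
    and bnd: "\<And>u. cmod (\<phi> u) \<le> Cb * nm u"
  shows "\<exists>z. \<forall>u. \<phi> u = ip u z"
proof (cases "\<forall>u. \<phi> u = 0")
  case True then show ?thesis by (intro exI[of _ 0]) simp
next
  case False
  then obtain u0 where u0: "\<phi> u0 \<noteq> 0" by blast
  define N where "N = {u. \<phi> u = 0}"
  have phi0: "\<phi> 0 = 0" using hom[of 0 0] by simp
  have phidiff: "\<phi> (u - v) = \<phi> u - \<phi> v" for u v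
    using add[of "u - v" v] by simp
  have sN: "subsp N" unfolding subsp_def N_def using add hom phi0 by auto
  have Cbpos: "Cb > 0"
  proof (rule ccontr)
    assume "\<not> Cb > 0"
    hence "Cb * nm u0 \<le> 0" by (simp add: mult_nonpos_nonneg)
    moreover have "cmod (\<phi> u0) > 0" using u0 by simp
    ultimately show False using bnd[of u0] by linarith
  qed
  have cN: "clo N \<subseteq> N"
  proof
    fix u assume u: "u \<in> clo N"
    show "u \<in> N"
    proof (rule ccontr)
      assume "u \<notin> N"
      hence pos: "cmod (\<phi> u) / Cb > 0" using Cbpos by (simp add: N_def)
      then obtain s where s: "s \<in> N" "nm (u - s) < cmod (\<phi> u) / Cb" using cloD[OF u] by blast
      have "cmod (\<phi> u) = cmod (\<phi> (u - s))" using s(1) by (simp add: N_def phidiff)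
      also have "\<dots> \<le> Cb * nm (u - s)" by (rule bnd)
      also have "\<dots> < Cb * (cmod (\<phi> u) / Cb)" using s(2) Cbpos by (simp add: pos_less_divide_eq mult.commute)
      also have "\<dots> = cmod (\<phi> u)" using Cbpos by simp
      finally show False by simp
    qed
  qed
  obtain p where p: "p \<in> N" "\<forall>s\<in>N. ip (u0 - p) s = 0" using proj[OF sN cN] by blast
  define q where "q = u0 - p"
  have phq: "\<phi> q = \<phi> u0" using p(1) by (simp add: q_def phidiff N_def)
  have qnz: "q \<noteq> 0" using phq u0 phi0 by auto
  have qq: "ip q q \<noteq> 0" using qnz ip_zero_imp by blast
  have qqc: "cnj (ip q q) = ip q q" using ip_sym[of q q] by simp
  show ?thesis
  proof (intro exI[of _ "sm (cnj (\<phi> q) / ip q q) q"] allI)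
    fix u
    define c where "c = \<phi> u / \<phi> q"
    have "u - sm c q \<in> N" using phq u0 by (simp add: N_def phidiff hom c_def)
    hence "ip (u0 - p) (u - sm c q) = 0" using p(2) by blast
    hence "ip q (u - sm c q) = 0" by (simp only: q_def)
    hence "ip (u - sm c q) q = 0" using ip_sym by (metis complex_cnj_zero)
    hence uq: "ip u q = c * ip q q" by simp
    have "ip u (sm (cnj (\<phi> q) / ip q q) q) = \<phi> q / cnj (ip q q) * (c * ip q q)" by (simp add: uq)
    also have "\<dots> = \<phi> u" using qq phq u0 by (simp add: qqc c_def)
    finally show "\<phi> u = ip u (sm (cnj (\<phi> q) / ip q q) q)" by simp
  qed
qed

end

locale hsT = hs +
  fixes T
  assumes ct: "contraction_op sm ip T"
begin

lemma T_add[simp]: "T (x + y) = T x + T y" using ct unfolding contraction_op_def by blast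
lemma T_sm[simp]: "T (sm a x) = sm a (T x)" using ct unfolding contraction_op_def by blast
lemma T_nm: "nm (T x) \<le> nm x" using ct unfolding contraction_op_def by blast
lemma T_zero[simp]: "T 0 = 0" using T_add[of 0 0] by simp
lemma T_minus[simp]: "T (- x) = - T x"
  using T_add[of x "-x"] by (simp add: eq_neg_iff_add_eq_0 add.commute)
lemma T_diff[simp]: "T (x - y) = T x - T y" using T_add[of x "-y"] by simp
lemma T_lip: "nm (T x - T y) \<le> nm (x - y)" using T_nm[of "x - y"] by simp

lemma Tn_add[simp]: "(T^^n) (x + y) = (T^^n) x + (T^^n) y" by (induction n) auto
lemma Tn_sm[simp]: "(T^^n) (sm a x) = sm a ((T^^n) x)" by (induction n) auto
lemma Tn_zero[simp]: "(T^^n) 0 = 0" by (induction n) auto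
lemma Tn_diff[simp]: "(T^^n) (x - y) = (T^^n) x - (T^^n) y" by (induction n) auto
lemma Tn_lip: "nm ((T^^n) x - (T^^n) y) \<le> nm (x - y)"
proof (induction n)
  case (Suc n) thus ?case using T_lip[of "(T^^n) x" "(T^^n) y"] by simp
qed simp

definition Kt where "Kt = {v. nm (T v) = nm v}"

lemma quad_zero:
  fixes B \<beta> :: real
  assumes h: "\<And>r. r > 0 \<Longrightarrow> 2 * r * B \<le> r^2 * B * \<beta>" and b: "\<beta> \<ge> 0" and B: "B \<ge> 0"
  shows "B = 0"
proof (rule ccontr)
  assume "B \<noteq> 0" hence Bpos: "B > 0" using B by simp
  define r where "r = 1 / (\<beta> + 1)"
  have sp: "\<beta> + 1 > 0" using b by simp
  hence rpos: "r > 0" by (simp add: r_def)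
  have rs: "r * \<beta> < 1" using sp by (simp add: r_def divide_less_eq)
  have "2 * r * B \<le> r * B * (r * \<beta>)" using h[OF rpos] by (simp add: power2_eq_square mult.assoc mult.left_commute)
  also have "\<dots> < r * B * 1" using rs rpos Bpos by (intro mult_strict_left_mono) auto
  finally show False using rpos Bpos by simp
qed

lemma Kt_ip: assumes v: "v \<in> Kt" shows "ip (T u) (T v) = ip u v"
proof -
  define b where "b = ip v u - ip (T v) (T u)"
  have "cmod b ^ 2 = 0"
  proof (rule quad_zero)
    show "(nm u)^2 - (nm (T u))^2 \<ge> 0" using T_nm[of u] by (simp add: power_mono)
    show "cmod b ^ 2 \<ge> 0" by simp
    fix r :: real assume r: "r > 0"
    define t where "t = of_real r * b"
    have "(nm (T v - sm t (T u)))^2 \<le> (nm (v - sm t u))^2"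
      using T_nm[of "v - sm t u"] by (simp add: power_mono)
    hence "(nm (T v))^2 - 2 * Re (cnj t * ip (T v) (T u)) + (cmod t)^2 * (nm (T u))^2
         \<le> (nm v)^2 - 2 * Re (cnj t * ip v u) + (cmod t)^2 * (nm u)^2"
      by (simp only: nm_sq_diff_sm)
    hence "2 * Re (cnj t * b) \<le> (cmod t)^2 * ((nm u)^2 - (nm (T u))^2)"
      using v by (simp add: Kt_def b_def algebra_simps)
    moreover have "Re (cnj t * b) = r * (cmod b)^2"
    proof -
      have cb: "cnj b * b = of_real ((cmod b)^2)"
        by (simp add: complex_norm_square mult.commute del: of_real_power)
      have "cnj t * b = of_real r * (cnj b * b)" by (simp add: t_def)
      also have "\<dots> = of_real (r * (cmod b)^2)" by (simp add: cb)
      finally show ?thesis by simp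
    qed
    moreover have "(cmod t)^2 = r^2 * (cmod b)^2" using r
      by (simp add: t_def norm_mult power_mult_distrib)
    ultimately show "2 * r * (cmod b)^2 \<le> r^2 * (cmod b)^2 * ((nm u)^2 - (nm (T u))^2)"
      by (simp add: mult.assoc)
  qed
  hence "b = 0" by simp
  hence "ip v u = ip (T v) (T u)" by (simp add: b_def)
  thus ?thesis by (metis ip_sym)
qed

lemma Kt_iff: "v \<in> Kt \<longleftrightarrow> (\<forall>u. ip (T u) (T v) = ip u v)"
proof
  assume "\<forall>u. ip (T u) (T v) = ip u v"
  hence "ip (T v) (T v) = ip v v" by blast
  thus "v \<in> Kt" by (simp add: Kt_def hnorm_def)
qed (use Kt_ip in blast)

lemma kerK_eq: "kerK ip T = Kt"
proof
  show "Kt \<subseteq> kerK ip T"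
  proof
    fix v assume v: "v \<in> Kt"
    have "hadj ip T (T v) = v" unfolding hadj_def
    proof (rule the_equality)
      show "\<forall>x. ip (T x) (T v) = ip x v" using Kt_ip[OF v] by blast
      fix z assume z: "\<forall>x. ip (T x) (T v) = ip x z"
      hence eq: "ip (z - v) z = ip (z - v) v" using Kt_ip[OF v] by metis
      have "ip (z - v) (z - v) = 0" by (simp only: ip_diff_right eq diff_self)
      from ip_zero_imp[OF this] show "z = v" by simp
    qed
    thus "v \<in> kerK ip T" by (simp add: kerK_def)
  qed
next
  show "kerK ip T \<subseteq> Kt"
  proof
    fix v assume "v \<in> kerK ip T"
    hence hv: "v = hadj ip T (T v)" by (simp add: kerK_def)
    obtain z where z: "\<forall>u. ip (T u) (T v) = ip u z"
    proof -
      have "\<exists>z. \<forall>u. ip (T u) (T v) = ip u z"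
      proof (rule riesz)
        fix u show "cmod (ip (T u) (T v)) \<le> nm (T v) * nm u"
          using CS[of "T u" "T v"] T_nm[of u] by (metis mult.commute mult_left_mono nm_nonneg order_trans)
      qed simp_all
      thus ?thesis using that by blast
    qed
    have "\<forall>u. ip (T u) (T v) = ip u (hadj ip T (T v))" unfolding hadj_def
    proof (rule theI[of _ z])
      show "\<forall>u. ip (T u) (T v) = ip u z" by (rule z)
      fix y assume y: "\<forall>u. ip (T u) (T v) = ip u y"
      hence eq: "ip (y - z) y = ip (y - z) z" using z by metis
      have "ip (y - z) (y - z) = 0" by (simp only: ip_diff_right eq diff_self)
      from ip_zero_imp[OF this] show "y = z" by simp
    qed
    hence "\<forall>u. ip (T u) (T v) = ip u v" using hv by simp
    thus "v \<in> Kt" using Kt_iff by blast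
  qed
qed

lemma subsp_Kt: "subsp Kt"
  unfolding subsp_def by (auto simp: Kt_iff)

lemma clo_Kt: "clo Kt \<subseteq> Kt"
proof
  fix v assume v: "v \<in> clo Kt"
  have hyp: "\<bar>nm (T v) - nm v\<bar> \<le> 2 * e" if e: "e > 0" for e
  proof -
    obtain k where k: "k \<in> Kt" "nm (v - k) < e" using cloD[OF v e] by blast
    have "\<bar>nm (T v) - nm (T k)\<bar> \<le> nm (T v - T k)" by (rule nm_diff_ge)
    also have "\<dots> \<le> nm (v - k)" by (rule T_lip)
    finally have a: "\<bar>nm (T v) - nm (T k)\<bar> \<le> nm (v - k)" .
    have b: "\<bar>nm v - nm k\<bar> \<le> nm (v - k)" by (rule nm_diff_ge)
    have "nm (T k) = nm k" using k(1) by (simp add: Kt_def)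
    thus ?thesis using a b k(2) by linarith
  qed
  have "\<bar>nm (T v) - nm v\<bar> = 0"
  proof (rule ccontr)
    assume ne: "\<bar>nm (T v) - nm v\<bar> \<noteq> 0"
    hence "\<bar>nm (T v) - nm v\<bar> / 4 > 0" by simp
    from hyp[OF this] have "\<bar>nm (T v) - nm v\<bar> \<le> 2 * (\<bar>nm (T v) - nm v\<bar> / 4)" .
    moreover have "\<bar>nm (T v) - nm v\<bar> > 0" using ne by simp
    moreover have "\<And>a::real. a \<le> 2 * (a / 4) \<Longrightarrow> 0 < a \<Longrightarrow> False" by linarith
    ultimately show False by blast
  qed
  thus "v \<in> Kt" by (simp add: Kt_def)
qed

lemma seq_clo_map:
  assumes X: "\<And>j. f (X j) \<in> S" and f: "\<And>a b. nm (f a - f b) \<le> nm (a - b)"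
    and L: "(\<lambda>n. nm (X n - L)) \<longlonglongrightarrow> 0"
  shows "f L \<in> clo S"
proof (rule cloI)
  fix e :: real assume e: "e > 0"
  obtain N where N: "\<forall>n\<ge>N. norm (nm (X n - L) - 0) < e" using LIMSEQ_D[OF L e] by blast
  hence "nm (X N - L) < e" by simp
  hence "nm (f L - f (X N)) < e" using f[of L "X N"] nm_commute[of L "X N"] by linarith
  thus "\<exists>s\<in>S. nm (f L - s) < e" using X by blast
qed

lemma TK_closed: assumes v: "v \<in> clo (T ` Kt)" shows "\<exists>k\<in>Kt. v = T k"
proof -
  have "\<forall>n. \<exists>k\<in>Kt. nm (v - T k) < 1 / real (Suc n)"
  proof
    fix n
    have "1 / real (Suc n) > 0" by simp
    from cloD[OF v this] show "\<exists>k\<in>Kt. nm (v - T k) < 1 / real (Suc n)" by blast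
  qed
  then obtain ks where ks: "\<And>n. ks n \<in> Kt" "\<And>n. nm (v - T (ks n)) < 1 / real (Suc n)" by metis
  have "nm (ks m - ks n) \<le> 1 / Suc m + 1 / Suc n" for m n
  proof -
    have "ks m - ks n \<in> Kt" using ks(1) subsp_Kt by (intro subsp_diff) auto
    hence "nm (ks m - ks n) = nm (T (ks m) - T (ks n))" by (simp add: Kt_def)
    also have "\<dots> \<le> nm (T (ks m) - v) + nm (v - T (ks n))" by (rule nm_tri)
    also have "\<dots> \<le> 1 / Suc m + 1 / Suc n" using ks(2)[of m] ks(2)[of n] nm_commute[of "T (ks m)" v] by linarith
    finally show ?thesis .
  qed
  then obtain L where L: "\<And>n. nm (ks n - L) \<le> 1 / Suc n" using cauchy_lim[of 1 ks] by auto
  have LK: "L \<in> Kt"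
  proof -
    have "L \<in> clo Kt"
    proof (rule cloI)
      fix e :: real assume "e > 0"
      then obtain n where n: "1 / real (Suc n) < e" using small_n by blast
      have "nm (L - ks n) < e" using L[of n] n nm_commute[of L "ks n"] by simp
      thus "\<exists>s\<in>Kt. nm (L - s) < e" using ks(1) by blast
    qed
    thus ?thesis using clo_Kt by blast
  qed
  have "nm (v - T L) = 0"
  proof (rule ccontr)
    assume "nm (v - T L) \<noteq> 0"
    hence g: "nm (v - T L) / 2 > 0" using nm_nonneg[of "v - T L"] by linarith
    obtain n where n: "1 / real (Suc n) < nm (v - T L) / 2" using small_n[OF g] by blast
    have "nm (v - T L) \<le> nm (v - T (ks n)) + nm (T (ks n) - T L)" by (rule nm_tri)
    also have "nm (T (ks n) - T L) \<le> nm (ks n - L)" by (rule T_lip)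
    finally show False using ks(2)[of n] L[of n] n by linarith
  qed
  thus ?thesis using LK by auto
qed

definition Aset where "Aset z = (\<lambda>k. k - sm z (T k)) ` Kt"
definition Bset where "Bset z = (\<lambda>k. sm z k - T k) ` Kt"

lemma subsp_image:
  assumes S: "subsp S" and fa: "\<And>x y. f (x + y) = f x + f y" and fs: "\<And>a x. f (sm a x) = sm a (f x)"
  shows "subsp (f ` S)"
  unfolding subsp_def
proof (intro conjI ballI allI)
  have "f 0 = 0" using fs[of 0 0] by simp
  thus "0 \<in> f ` S" using subsp_0[OF S] by (metis image_eqI)
next
  fix x y assume "x \<in> f ` S" "y \<in> f ` S"
  then obtain a b where "a \<in> S" "b \<in> S" "x = f a" "y = f b" by blast
  thus "x + y \<in> f ` S" using fa subsp_add[OF S] by (metis image_eqI)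
next
  fix c x assume "x \<in> f ` S"
  then obtain a where "a \<in> S" "x = f a" by blast
  thus "sm c x \<in> f ` S" using fs subsp_sm[OF S] by (metis image_eqI)
qed

lemma subsp_Aset: "subsp (Aset z)"
  unfolding Aset_def by (rule subsp_image[OF subsp_Kt]) (simp_all add: algebra_simps)
lemma subsp_Bset: "subsp (Bset z)"
  unfolding Bset_def by (rule subsp_image[OF subsp_Kt]) (simp_all add: algebra_simps)

lemma Aset0: "Aset 0 = Kt" by (simp add: Aset_def)

lemma perp_AT: "(a, b) \<in> perp_s ip (AT ip T) \<longleftrightarrow> (\<forall>k\<in>Kt. ip a k = ip b (T k))"
proof -
  have "(\<i> * ip a k - \<i> * ip b (T k) = 0) \<longleftrightarrow> ip a k = ip b (T k)" for k
    by (simp add: right_diff_distrib[symmetric])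
  thus ?thesis unfolding perp_s_def AT_def krein_def kerK_eq by auto
qed

lemma Fdag_T0: "Fdag sm ip T (True, z) = {\<omega>. (sm (cnj z) \<omega>, \<omega>) \<in> perp_s ip (AT ip T)}"
proof (intro set_eqI iffI)
  fix \<omega> assume "\<omega> \<in> Fdag sm ip T (True, z)"
  thus "\<omega> \<in> {\<omega>. (sm (cnj z) \<omega>, \<omega>) \<in> perp_s ip (AT ip T)}" by (auto simp: Fdag_def El_def Nl_def)
next
  fix \<omega> assume h: "\<omega> \<in> {\<omega>. (sm (cnj z) \<omega>, \<omega>) \<in> perp_s ip (AT ip T)}"
  show "\<omega> \<in> Fdag sm ip T (True, z)" unfolding Fdag_def El_def Nl_def
    using h by (auto intro!: image_eqI[of _ snd "(sm (cnj z) \<omega>, \<omega>)"])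
qed

lemma Fdag_F0: "Fdag sm ip T (False, z) = {\<omega>. (\<omega>, sm (cnj z) \<omega>) \<in> perp_s ip (AT ip T)}"
proof (intro set_eqI iffI)
  fix \<omega> assume "\<omega> \<in> Fdag sm ip T (False, z)"
  thus "\<omega> \<in> {\<omega>. (\<omega>, sm (cnj z) \<omega>) \<in> perp_s ip (AT ip T)}" by (auto simp: Fdag_def El_def Nl_def)
next
  fix \<omega> assume h: "\<omega> \<in> {\<omega>. (\<omega>, sm (cnj z) \<omega>) \<in> perp_s ip (AT ip T)}"
  show "\<omega> \<in> Fdag sm ip T (False, z)" unfolding Fdag_def El_def Nl_def
    using h by (auto intro!: image_eqI[of _ fst "(\<omega>, sm (cnj z) \<omega>)"])
qed

lemma Fdag_T: "Fdag sm ip T (True, z) = {\<omega>. \<forall>s\<in>Bset z. ip s \<omega> = 0}"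
proof -
  have pt: "(cnj z * ip \<omega> k = ip \<omega> (T k)) \<longleftrightarrow> ip (sm z k - T k) \<omega> = 0" for \<omega> k
  proof -
    have "(cnj z * ip \<omega> k = ip \<omega> (T k)) \<longleftrightarrow> cnj z * ip \<omega> k - ip \<omega> (T k) = 0" by simp
    also have "cnj z * ip \<omega> k - ip \<omega> (T k) = cnj (ip (sm z k - T k) \<omega>)"
      using ip_sym[of k \<omega>] ip_sym[of "T k" \<omega>] by simp
    finally show ?thesis by (simp only: complex_cnj_zero_iff)
  qed
  show ?thesis unfolding Fdag_T0 perp_AT Bset_def using pt by auto
qed

lemma Fdag_F: "Fdag sm ip T (False, z) = {\<omega>. \<forall>s\<in>Aset z. ip s \<omega> = 0}"
proof -
  have pt: "(ip \<omega> k = cnj z * ip \<omega> (T k)) \<longleftrightarrow> ip (k - sm z (T k)) \<omega> = 0" for \<omega> k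
  proof -
    have "(ip \<omega> k = cnj z * ip \<omega> (T k)) \<longleftrightarrow> ip \<omega> k - cnj z * ip \<omega> (T k) = 0" by simp
    also have "ip \<omega> k - cnj z * ip \<omega> (T k) = cnj (ip (k - sm z (T k)) \<omega>)"
      using ip_sym[of k \<omega>] ip_sym[of "T k" \<omega>] by simp
    finally show ?thesis by (simp only: complex_cnj_zero_iff)
  qed
  show ?thesis unfolding Fdag_F0 perp_AT Aset_def using pt by auto
qed

end

context hsT begin

lemma clo_subsp_diff: "subsp S \<Longrightarrow> a \<in> clo S \<Longrightarrow> b \<in> clo S \<Longrightarrow> a - b \<in> clo S"
  using subsp_diff[OF subsp_clo] by blast
lemma clo_subsp_sm: "subsp S \<Longrightarrow> a \<in> clo S \<Longrightarrow> sm c a \<in> clo S"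
  using subsp_sm[OF subsp_clo] by blast
lemma clo_subsp_add: "subsp S \<Longrightarrow> a \<in> clo S \<Longrightarrow> b \<in> clo S \<Longrightarrow> a + b \<in> clo S"
  using subsp_add[OF subsp_clo] by blast

lemma sm_inv_cancel: "z \<noteq> 0 \<Longrightarrow> sm (1 / z) (sm z x) = x"
  by simp

lemma Q_K: assumes Q: "\<And>z. cmod z < 1 \<Longrightarrow> v \<in> clo (Aset z)" shows "v \<in> Kt"
  using Q[of 0] clo_Kt by (simp add: Aset0) blast

lemma Qstep_K:
  assumes Q: "\<And>z. cmod z < 1 \<Longrightarrow> v \<in> clo (Aset z)"
  shows "T v \<in> Kt"
proof -
  have vK: "v \<in> Kt" by (rule Q_K[OF Q])
  have "T v \<in> clo Kt"
  proof (rule cloI)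
    fix e :: real assume e: "e > 0"
    define C0 where "C0 = 2 * nm v + 4"
    have C0: "C0 > 0" by (simp add: C0_def add_nonneg_pos)
    define t where "t = min (1/2) (e / (2 * C0))"
    have tpos: "t > 0" using e C0 by (simp add: t_def)
    have th: "t \<le> 1/2" by (simp add: t_def)
    have tC: "t * C0 \<le> e / 2"
    proof -
      have "t \<le> e / (2 * C0)" by (simp add: t_def)
      hence "t * C0 \<le> e / (2 * C0) * C0" using C0 by (intro mult_right_mono) auto
      also have "\<dots> = e / 2" using C0 by simp
      finally show ?thesis .
    qed
    define c where "c = complex_of_real t"
    have cm: "cmod c = t" using tpos by (simp add: c_def)
    have "cmod c < 1" using cm th by simp
    from Q[OF this] have "v \<in> clo (Aset c)" .
    moreover have "t^2 > 0" using tpos by simp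
    ultimately obtain s where "s \<in> Aset c" "nm (v - s) < t^2" using cloD by blast
    then obtain k where k: "k \<in> Kt" "nm (v - (k - sm c (T k))) < t^2" unfolding Aset_def by blast
    define r where "r = (k - sm c (T k)) - v"
    have nr: "nm r < t^2" using k(2) nm_commute[of v "k - sm c (T k)"] by (simp add: r_def)
    have t2: "t^2 \<le> t / 2" using th tpos by (simp add: power2_eq_square)
    have nTk: "nm (T k) = nm k" using k(1) by (simp add: Kt_def)
    have nk: "nm k \<le> 2 * (nm v + 1)"
    proof -
      have "k = (v + r) + sm c (T k)" by (simp add: r_def)
      hence "nm k \<le> nm (v + r) + nm (sm c (T k))" using nm_add by metis
      also have "nm (v + r) \<le> nm v + nm r" by (rule nm_add)
      also have "nm (sm c (T k)) = t * nm k" using cm nTk by simp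
      finally have "nm k \<le> nm v + nm r + t * nm k" by simp
      moreover have "t * nm k \<le> (1/2) * nm k" by (rule mult_right_mono[OF th nm_nonneg])
      moreover have "\<And>(K::real) (V::real) (R::real) (P::real) (Q::real) (tt::real). K \<le> V + R + P \<Longrightarrow> P \<le> 1/2 * K \<Longrightarrow> R < Q \<Longrightarrow> Q \<le> tt/2 \<Longrightarrow> tt \<le> 1/2 \<Longrightarrow> K \<le> 2 * (V + 1)"
        by (simp add: field_simps)
      ultimately show ?thesis using nr t2 th by blast
    qed
    define w where "w = sm (1 / c) (k - v)"
    have wK: "w \<in> Kt" unfolding w_def using k(1) vK subsp_Kt by (intro subsp_sm subsp_diff) auto
    have cnz: "c \<noteq> 0" using tpos by (simp add: c_def)
    have kv: "k - v = sm c (T k) + r" by (simp add: r_def)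
    have weq: "T v - w = (T v - T k) - sm (1 / c) r"
    proof -
      have "w = sm (1 / c) (sm c (T k)) + sm (1 / c) r" by (simp add: w_def kv)
      also have "\<dots> = T k + sm (1 / c) r" using cnz by simp
      finally show ?thesis by (simp add: algebra_simps)
    qed
    have a1: "nm (T v - w) \<le> nm (T v - T k) + nm (sm (1 / c) r)"
      unfolding weq using nm_add[of "T v - T k" "- sm (1 / c) r"] by simp
    have a2: "nm (T v - T k) \<le> nm (v - k)" by (rule T_lip)
    have a3: "nm (v - k) \<le> t * nm k + nm r"
    proof -
      have "nm (v - k) = nm (k - v)" by (rule nm_commute)
      also have "\<dots> \<le> nm (sm c (T k)) + nm r" unfolding kv by (rule nm_add)
      also have "nm (sm c (T k)) = t * nm k" using cm nTk by simp
      finally show ?thesis .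
    qed
    have a4: "nm (sm (1 / c) r) = nm r / t" using cm by (simp add: norm_divide)
    have "nm (T v - w) \<le> t * nm k + nm r + nm r / t" using a1 a2 a3 a4 by linarith
    moreover have "nm r / t < t" using nr tpos by (simp add: divide_less_eq power2_eq_square)
    moreover have "t * nm k \<le> t * (2 * (nm v + 1))" using nk tpos by (intro mult_left_mono) auto
    moreover have "t * (2 * (nm v + 1)) + t / 2 + t < t * C0" using tpos by (simp add: C0_def algebra_simps)
    ultimately have "nm (T v - w) < e" using nr t2 tC e by linarith
    thus "\<exists>s\<in>Kt. nm (T v - s) < e" using wK by blast
  qed
  thus ?thesis using clo_Kt by blast
qed

lemma Qstep:
  assumes Q: "\<And>z. cmod z < 1 \<Longrightarrow> v \<in> clo (Aset z)"
  shows "\<And>z. cmod z < 1 \<Longrightarrow> T v \<in> clo (Aset z)"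
proof -
  fix z :: complex assume z: "cmod z < 1"
  have vK: "v \<in> Kt" by (rule Q_K[OF Q])
  have TvK: "T v \<in> Kt" by (rule Qstep_K[OF Q])
  show "T v \<in> clo (Aset z)"
  proof (cases "z = 0")
    case True thus ?thesis using TvK clo_sub by (auto simp: Aset0)
  next
    case False
    have "v - sm z (T v) \<in> Aset z" using vK by (auto simp: Aset_def)
    hence "v - (v - sm z (T v)) \<in> clo (Aset z)"
      by (meson clo_subsp_diff[OF subsp_Aset Q[OF z]] clo_sub subsetD)
    hence "sm (1 / z) (v - (v - sm z (T v))) \<in> clo (Aset z)" by (rule clo_subsp_sm[OF subsp_Aset])
    moreover have "sm (1 / z) (v - (v - sm z (T v))) = T v" using False by simp
    ultimately show ?thesis by simp
  qed
qed

lemma Q_iter: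
  assumes Q: "\<And>z. cmod z < 1 \<Longrightarrow> v \<in> clo (Aset z)"
  shows "\<And>z. cmod z < 1 \<Longrightarrow> (T^^n) v \<in> clo (Aset z)"
proof (induction n)
  case 0 thus ?case using Q by simp
next
  case (Suc n)
  have "T ((T^^n) v) \<in> clo (Aset z)" by (rule Qstep[OF Suc.IH Suc.prems])
  thus ?case by simp
qed

end

context hsT begin

definition Mset where
  "Mset = {v. (\<forall>n. (T^^n) v \<in> Kt) \<and> (\<forall>z. 0 < cmod z \<and> cmod z < 1 \<longrightarrow> v \<in> clo (Bset z))}"

lemma M_closed: "closed_subspace_h sm ip Mset"
  unfolding closed_subspace_h_def
proof (intro conjI allI ballI impI)
  show "0 \<in> Mset" unfolding Mset_def
    using subsp_0[OF subsp_Kt] subsp_0[OF subsp_clo[OF subsp_Bset]] by simp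
next
  fix x y assume x: "x \<in> Mset" and y: "y \<in> Mset"
  show "x + y \<in> Mset" unfolding Mset_def
  proof (intro CollectI conjI allI impI)
    fix n show "(T^^n) (x + y) \<in> Kt"
      using x y subsp_add[OF subsp_Kt] by (simp add: Mset_def)
  next
    fix z :: complex assume "0 < cmod z \<and> cmod z < 1"
    thus "x + y \<in> clo (Bset z)" using x y clo_subsp_add[OF subsp_Bset] by (simp add: Mset_def)
  qed
next
  fix a x assume x: "x \<in> Mset"
  show "sm a x \<in> Mset" unfolding Mset_def
  proof (intro CollectI conjI allI impI)
    fix n show "(T^^n) (sm a x) \<in> Kt"
      using x subsp_sm[OF subsp_Kt] by (simp add: Mset_def)
  next
    fix z :: complex assume "0 < cmod z \<and> cmod z < 1"
    thus "sm a x \<in> clo (Bset z)" using x clo_subsp_sm[OF subsp_Bset] by (simp add: Mset_def)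
  qed
next
  fix X L assume h: "(\<forall>n. X n \<in> Mset) \<and> (\<lambda>n. nm (X n - L)) \<longlonglongrightarrow> 0"
  show "L \<in> Mset" unfolding Mset_def
  proof (intro CollectI conjI allI impI)
    fix n
    have "(T^^n) L \<in> clo Kt"
      by (rule seq_clo_map[of "T^^n" X Kt L]) (use h Tn_lip in \<open>auto simp: Mset_def\<close>)
    thus "(T^^n) L \<in> Kt" using clo_Kt by blast
  next
    fix z :: complex assume z: "0 < cmod z \<and> cmod z < 1"
    have "(\<lambda>x. x) L \<in> clo (clo (Bset z))"
      by (rule seq_clo_map[of "\<lambda>x. x" X "clo (Bset z)" L]) (use h z in \<open>auto simp: Mset_def\<close>)
    thus "L \<in> clo (Bset z)" using clo_clo by auto
  qed
qed

lemma M_iso: "\<forall>x\<in>Mset. nm (T x) = nm x"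
proof
  fix x assume "x \<in> Mset"
  hence "(T^^0) x \<in> Kt" unfolding Mset_def by blast
  thus "nm (T x) = nm x" by (simp add: Kt_def)
qed

lemma M_fwd: assumes v: "v \<in> Mset" shows "T v \<in> Mset"
  unfolding Mset_def
proof (intro CollectI conjI allI impI)
  fix n
  have "(T^^(Suc n)) v \<in> Kt" using v by (simp only: Mset_def mem_Collect_eq)
  thus "(T^^n) (T v) \<in> Kt" by (simp add: funpow_Suc_right del: funpow.simps)
next
  fix z :: complex assume z: "0 < cmod z \<and> cmod z < 1"
  have vK: "v \<in> Kt" using v unfolding Mset_def by (metis (no_types, lifting) funpow_0 mem_Collect_eq)
  have vB: "v \<in> clo (Bset z)" using v z unfolding Mset_def by blast
  have "sm z v - T v \<in> Bset z" using vK by (auto simp: Bset_def)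
  hence "sm z v - (sm z v - T v) \<in> clo (Bset z)"
    by (meson clo_subsp_diff[OF subsp_Bset] clo_subsp_sm[OF subsp_Bset vB] clo_sub subsetD)
  thus "T v \<in> clo (Bset z)" by simp
qed

lemma M_back: assumes v: "v \<in> Mset" shows "\<exists>v1\<in>Mset. v = T v1"
proof -
  have vK: "v \<in> Kt" using v unfolding Mset_def by (metis (no_types, lifting) funpow_0 mem_Collect_eq)
  have vB: "\<And>z. 0 < cmod z \<Longrightarrow> cmod z < 1 \<Longrightarrow> v \<in> clo (Bset z)" using v unfolding Mset_def by blast
  have "v \<in> clo (T ` Kt)"
  proof (rule cloI)
    fix e :: real assume e: "e > 0"
    define C1 where "C1 = 2 * nm v + 2"
    have C1: "C1 > 0" by (simp add: C1_def add_nonneg_pos)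
    define t where "t = min (1/2) (e / (2 * C1))"
    have tpos: "t > 0" using e C1 by (simp add: t_def)
    have th: "t \<le> 1/2" by (simp add: t_def)
    have tC: "t * C1 \<le> e / 2"
    proof -
      have "t \<le> e / (2 * C1)" by (simp add: t_def)
      hence "t * C1 \<le> e / (2 * C1) * C1" using C1 by (intro mult_right_mono) auto
      also have "\<dots> = e / 2" using C1 by simp
      finally show ?thesis .
    qed
    define c where "c = complex_of_real t"
    have cm: "cmod c = t" using tpos by (simp add: c_def)
    have "v \<in> clo (Bset c)" by (rule vB) (use cm tpos th in simp_all)
    moreover have dpos: "min (e/2) 1 > 0" using e by simp
    ultimately obtain s where "s \<in> Bset c" "nm (v - s) < min (e/2) 1" using cloD by blast
    then obtain k where k: "k \<in> Kt" "nm (v - (sm c k - T k)) < min (e/2) 1" unfolding Bset_def by blast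
    have nTk: "nm (T k) = nm k" using k(1) by (simp add: Kt_def)
    have nk: "nm k \<le> C1"
    proof -
      define a where "a = sm c k - T k"
      have "T k = - a + sm c k" by (simp add: a_def)
      hence n1: "nm (T k) \<le> nm a + nm (sm c k)" using nm_add[of "- a" "sm c k"] by simp
      have n2: "nm a \<le> nm v + nm (v - a)"
        using nm_tri[of a 0 v] nm_commute[of a v] by simp
      have n3: "nm (sm c k) = t * nm k" using cm by simp
      have n4: "t * nm k \<le> (1/2) * nm k" by (rule mult_right_mono[OF th nm_nonneg])
      have n5: "nm (v - a) < 1" using k(2) by (simp add: a_def)
      have "\<And>(K::real) (V::real) (A::real) (D::real) (P::real). K \<le> A + P \<Longrightarrow> A \<le> V + D \<Longrightarrow> P \<le> 1/2 * K \<Longrightarrow> D < 1 \<Longrightarrow> K \<le> 2 * V + 2"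
        by (simp add: field_simps)
      from this[OF n1[unfolded nTk n3] n2 n4 n5] show ?thesis by (simp add: C1_def)
    qed
    have mk: "- k \<in> Kt" using k(1) subsp_minus[OF subsp_Kt] by blast
    have "v - T (- k) = (v - (sm c k - T k)) + sm c k" by simp
    hence "nm (v - T (- k)) \<le> nm (v - (sm c k - T k)) + nm (sm c k)" using nm_add by metis
    also have "nm (sm c k) = t * nm k" using cm by simp
    finally have "nm (v - T (- k)) \<le> nm (v - (sm c k - T k)) + t * nm k" .
    moreover have "t * nm k \<le> t * C1" using nk tpos by (intro mult_left_mono) auto
    moreover have "nm (v - (sm c k - T k)) < e / 2" using k(2) by simp
    ultimately have "nm (v - T (- k)) < e" using tC by linarith
    thus "\<exists>s\<in>T ` Kt. nm (v - s) < e" using mk by blast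
  qed
  then obtain v1 where v1: "v1 \<in> Kt" "v = T v1" using TK_closed by blast
  have "v1 \<in> Mset" unfolding Mset_def
  proof (intro CollectI conjI allI impI)
    fix n show "(T^^n) v1 \<in> Kt"
    proof (cases n)
      case 0 thus ?thesis using v1 by simp
    next
      case (Suc m)
      have "(T^^m) v \<in> Kt" using v unfolding Mset_def by blast
      thus ?thesis using Suc v1(2) by (simp add: funpow_Suc_right del: funpow.simps)
    qed
  next
    fix z :: complex assume z: "0 < cmod z \<and> cmod z < 1"
    have zne: "z \<noteq> 0" using z by auto
    show "v1 \<in> clo (Bset z)"
    proof (rule cloI)
      fix e :: real assume e: "e > 0"
      have "cmod z * e > 0" using z e by simp
      then obtain s where "s \<in> Bset z" "nm (v - s) < cmod z * e" using cloD vB z by blast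
      then obtain k where k: "k \<in> Kt" "nm (v - (sm z k - T k)) < cmod z * e" unfolding Bset_def by blast
      define k' where "k' = sm (1 / z) (k + v1)"
      have k'K: "k' \<in> Kt" unfolding k'_def using k(1) v1(1) subsp_Kt by (intro subsp_sm subsp_add) auto
      have eq: "v1 - (sm z k' - T k') = sm (1 / z) (v - (sm z k - T k))"
        using zne by (simp add: k'_def v1(2) algebra_simps)
      have "nm (v1 - (sm z k' - T k')) = nm (v - (sm z k - T k)) / cmod z"
        unfolding eq nm_sm by (simp add: norm_divide)
      also have "\<dots> < e" using k(2) z by (simp add: divide_less_eq mult.commute)
      finally show "\<exists>s\<in>Bset z. nm (v1 - s) < e" using k'K by (auto simp: Bset_def)
    qed
  qed
  thus ?thesis using v1 by blast
qed

lemma M_T: "T ` Mset = Mset"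
  using M_fwd M_back by blast

lemma M_zero: assumes "cnu sm ip T" shows "Mset = {0}"
  using assms M_closed M_T M_iso unfolding cnu_def by blast

lemma main_back:
  assumes cnuT: "cnu sm ip T"
  and c1: "\<And>z \<omega>. cmod z < 1 \<Longrightarrow> (\<forall>s\<in>Bset z. ip s \<omega> = 0) \<Longrightarrow> ip y \<omega> = z * ip x \<omega>"
  and c2: "\<And>z \<omega>. cmod z < 1 \<Longrightarrow> (\<forall>s\<in>Aset z. ip s \<omega> = 0) \<Longrightarrow> z * ip y \<omega> = ip x \<omega>"
  shows "x \<in> Kt \<and> y = T x"
proof -
  have hA: "x - sm z y \<in> clo (Aset z)" if z: "cmod z < 1" for z
  proof (rule ortho_clo[OF subsp_Aset])
    fix w assume "\<forall>s\<in>Aset z. ip s w = 0"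
    from c2[OF z this] show "ip (x - sm z y) w = 0" by simp
  qed
  have hB: "y - sm z x \<in> clo (Bset z)" if z: "cmod z < 1" for z
  proof (rule ortho_clo[OF subsp_Bset])
    fix w assume "\<forall>s\<in>Bset z. ip s w = 0"
    from c1[OF z this] show "ip (y - sm z x) w = 0" by simp
  qed
  have xK: "x \<in> Kt" using hA[of 0] clo_Kt by (auto simp: Aset0)
  have "Bset 0 \<subseteq> T ` Kt"
  proof
    fix s assume "s \<in> Bset 0"
    then obtain k where k: "k \<in> Kt" "s = - T k" by (auto simp: Bset_def)
    hence "s = T (- k)" "- k \<in> Kt" using subsp_minus[OF subsp_Kt] by auto
    thus "s \<in> T ` Kt" by blast
  qed
  hence "y \<in> clo (T ` Kt)" using hB[of 0] clo_mono by auto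
  then obtain k0 where k0: "k0 \<in> Kt" "y = T k0" using TK_closed by blast
  define e where "e = x - k0"
  have Qe: "e \<in> clo (Aset z)" if z: "cmod z < 1" for z
  proof -
    have "k0 - sm z (T k0) \<in> Aset z" using k0(1) by (auto simp: Aset_def)
    hence "(x - sm z y) - (k0 - sm z (T k0)) \<in> clo (Aset z)"
      by (meson clo_subsp_diff[OF subsp_Aset hA[OF z]] clo_sub subsetD)
    moreover have "(x - sm z y) - (k0 - sm z (T k0)) = e" by (simp add: e_def k0(2))
    ultimately show ?thesis by simp
  qed
  have Pe: "e \<in> clo (Bset z)" if z: "0 < cmod z" "cmod z < 1" for z
  proof -
    have "sm z k0 - T k0 \<in> Bset z" using k0(1) by (auto simp: Bset_def)
    hence "- (y - sm z x) - (sm z k0 - T k0) \<in> clo (Bset z)"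
      using subsp_minus[OF subsp_clo[OF subsp_Bset] hB[OF z(2)]]
      by (meson clo_subsp_diff[OF subsp_Bset] clo_sub subsetD)
    moreover have "- (y - sm z x) - (sm z k0 - T k0) = sm z e" by (simp add: e_def k0(2))
    ultimately have "sm z e \<in> clo (Bset z)" by simp
    hence "sm (1 / z) (sm z e) \<in> clo (Bset z)" by (rule clo_subsp_sm[OF subsp_Bset])
    thus ?thesis using z by simp
  qed
  have "e \<in> Mset" unfolding Mset_def
  proof (intro CollectI conjI allI impI)
    fix n
    show "(T^^n) e \<in> Kt" by (rule Q_K) (rule Q_iter[OF Qe])
  next
    fix z :: complex assume "0 < cmod z \<and> cmod z < 1"
    thus "e \<in> clo (Bset z)" using Pe by blast
  qed
  hence "e = 0" using M_zero[OF cnuT] by blast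
  hence "x = k0" by (simp add: e_def)
  thus ?thesis using xK k0 by simp
qed

end

theorem proposition4p10:
  fixes sm :: "complex \<Rightarrow> 'h::ab_group_add \<Rightarrow> 'h"
    and ip :: "'h \<Rightarrow> 'h \<Rightarrow> complex"
    and T :: "'h \<Rightarrow> 'h"
    and f g :: "bool \<times> complex \<Rightarrow> 'h \<Rightarrow> complex"
  assumes "chilbert sm ip" and "separable_h ip" and "infinite_dim_h sm"
    and "contraction_op sm ip T" and "cnu sm ip T"
    and "f \<in> frakH ip" and "g \<in> frakH ip"
  shows "(f, g) \<in> hatS ip (AT ip T) \<longleftrightarrow>
           (\<forall>z. cmod z < 1 \<longrightarrow> (\<forall>\<omega>\<in>Fdag sm ip T (True, z). g (True, z) \<omega> = z * f (True, z) \<omega>)) \<and>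
           (\<forall>z. cmod z < 1 \<longrightarrow> (\<forall>\<omega>\<in>Fdag sm ip T (False, z). z * g (False, z) \<omega> = f (False, z) \<omega>))"
proof -
  interpret hsT sm ip T
    using assms(1,4) by (simp add: hsT_def hs_def hsT_axioms_def)
  obtain x where fx: "f = hat ip x" using assms(6) by (auto simp: frakH_def)
  obtain y where gy: "g = hat ip y" using assms(7) by (auto simp: frakH_def)
  show ?thesis
  proof
    assume "(f, g) \<in> hatS ip (AT ip T)"
    then obtain a b where ab: "f = hat ip a" "g = hat ip b" "(a, b) \<in> AT ip T"
      by (auto simp: hatS_def)
    have aK: "a \<in> Kt" and bT: "b = T a" using ab(3) by (auto simp: AT_def kerK_eq)
    show "(\<forall>z. cmod z < 1 \<longrightarrow> (\<forall>\<omega>\<in>Fdag sm ip T (True, z). g (True, z) \<omega> = z * f (True, z) \<omega>)) \<and>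
           (\<forall>z. cmod z < 1 \<longrightarrow> (\<forall>\<omega>\<in>Fdag sm ip T (False, z). z * g (False, z) \<omega> = f (False, z) \<omega>))"
    proof (intro conjI allI impI ballI)
      fix z \<omega> assume "\<omega> \<in> Fdag sm ip T (True, z)"
      hence "\<forall>s\<in>Bset z. ip s \<omega> = 0" by (simp add: Fdag_T)
      moreover have "sm z a - T a \<in> Bset z" using aK by (auto simp: Bset_def)
      ultimately have "ip (sm z a - T a) \<omega> = 0" by blast
      thus "g (True, z) \<omega> = z * f (True, z) \<omega>" by (simp add: ab bT hat_def)
    next
      fix z \<omega> assume "\<omega> \<in> Fdag sm ip T (False, z)"
      hence "\<forall>s\<in>Aset z. ip s \<omega> = 0" by (simp add: Fdag_F)
      moreover have "a - sm z (T a) \<in> Aset z" using aK by (auto simp: Aset_def)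
      ultimately have "ip (a - sm z (T a)) \<omega> = 0" by blast
      thus "z * g (False, z) \<omega> = f (False, z) \<omega>" by (simp add: ab bT hat_def)
    qed
  next
    assume h: "(\<forall>z. cmod z < 1 \<longrightarrow> (\<forall>\<omega>\<in>Fdag sm ip T (True, z). g (True, z) \<omega> = z * f (True, z) \<omega>)) \<and>
           (\<forall>z. cmod z < 1 \<longrightarrow> (\<forall>\<omega>\<in>Fdag sm ip T (False, z). z * g (False, z) \<omega> = f (False, z) \<omega>))"
    have "x \<in> Kt \<and> y = T x"
    proof (rule main_back[OF assms(5)])
      fix z \<omega> assume z: "cmod z < 1" and w: "\<forall>s\<in>Bset z. ip s \<omega> = 0"
      hence "\<omega> \<in> Fdag sm ip T (True, z)" by (simp add: Fdag_T)
      thus "ip y \<omega> = z * ip x \<omega>" using h z by (simp add: fx gy hat_def)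
    next
      fix z \<omega> assume z: "cmod z < 1" and w: "\<forall>s\<in>Aset z. ip s \<omega> = 0"
      hence "\<omega> \<in> Fdag sm ip T (False, z)" by (simp add: Fdag_F)
      thus "z * ip y \<omega> = ip x \<omega>" using h z by (simp add: fx gy hat_def)
    qed
    hence "(x, y) \<in> AT ip T" by (auto simp: AT_def kerK_eq)
    thus "(f, g) \<in> hatS ip (AT ip T)" by (auto simp: hatS_def fx gy)
  qed
qed

end
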